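(* Let $m\ge1$ be an integer and let $\xi_1,\dots,\xi_m$ be the zeroes of the function $\alpha_m$. Suppose that for each $i$, $\eta_i=\eta_i(\Delta)$ are numbers satisfying $\eta_i=\xi_i-1+s_i\sqrt{(\xi_i-1)^2-1}+o(1)$ as $\Delta\downarrow0$ for some sign $s_i\in\{+1,-1\}$, where the sign is chosen such that $|\eta_i|<1$ for all sufficiently small $\Delta$. Then necessarily $s_i=-1$, i.e. $$\eta_i=\xi_i-1-\sqrt{(\xi_i-1)^2-1}+o(1),\qquad i=1,\dots,m,$$ and moreover $\xi_i-1-\sqrt{(\xi_i-1)^2-1}\in(0,1)$ for all $i$.
   Context: For $x\in\mathbb{R}\setminus\{0\}$ the functions $\alpha_k(x)$, $k\ge0$, are defined by the power series expansion in $z$ $$\frac{\sinh(z)}{\cosh(z)-1+x}=\sum_{k=0}^\infty\alpha_k(x)z^{2k+1}.$$ (In the paper, $m=p-q-1$ for a CARMA$(p,q)$ process and $\eta_i$ are the "spurious" moving average coefficients of the sampled process.) *)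

theory Defs
  imports "HOL-Analysis.Analysis"
begin

definition alpha :: "nat \<Rightarrow> real \<Rightarrow> real" where
  "alpha k x = (deriv ^^ (2 * k + 1)) (\<lambda>z::real. sinh z / (cosh z - 1 + x)) 0
                / fact (2 * k + 1)"

end

theory Submission
  imports Defs "HOL-Computational_Algebra.Polynomial"
begin


definition NN :: "real poly \<Rightarrow> bool" where "NN p \<longleftrightarrow> (\<forall>i. coeff p i \<ge> 0)"

lemma NN_mult: "NN p \<Longrightarrow> NN q \<Longrightarrow> NN (p * q)"
  unfolding NN_def coeff_mult by (auto intro!: sum_nonneg)
lemma NN_add: "NN p \<Longrightarrow> NN q \<Longrightarrow> NN (p + q)"
  unfolding NN_def by (auto simp: add_nonneg_nonneg)
lemma NN_smult: "c \<ge> 0 \<Longrightarrow> NN p \<Longrightarrow> NN (smult c p)"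
  unfolding NN_def by auto
lemma NN_pderiv: "NN p \<Longrightarrow> NN (pderiv p)"
  unfolding NN_def coeff_pderiv by auto
lemma NN_lin: "a \<ge> 0 \<Longrightarrow> b \<ge> 0 \<Longrightarrow> NN [:a, b:]"
  unfolding NN_def by (auto simp: coeff_pCons split: nat.splits)
lemma NN_const: "a \<ge> 0 \<Longrightarrow> NN [:a:]"
  unfolding NN_def by (auto simp: coeff_pCons split: nat.splits)
lemma NN_1: "NN 1"
  unfolding NN_def by (auto simp: coeff_1)
lemma NN_pCons: "NN (pCons a p) \<Longrightarrow> a \<ge> 0 \<and> NN p"
  unfolding NN_def by (metis coeff_pCons_0 coeff_pCons_Suc)
lemma NN_nonneg: "NN p \<Longrightarrow> s \<ge> 0 \<Longrightarrow> poly p s \<ge> 0"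
proof (induction p)
  case (pCons a p) then show ?case using NN_pCons[OF pCons.prems(1)] by simp
qed simp
lemma NN_lower: assumes "NN p" "s \<ge> 0" shows "poly p 0 + s * poly (pderiv p) 0 \<le> poly p s"
proof -
  obtain a q where p: "p = pCons a q" by (cases p) auto
  obtain b r where q: "q = pCons b r" by (cases q) auto
  from assms(1) have "NN r" unfolding p q using NN_pCons by blast
  hence "poly r s \<ge> 0" using NN_nonneg assms(2) by blast
  hence "0 \<le> s * (s * poly r s)" using assms(2) by simp
  thus ?thesis unfolding p q by (simp add: pderiv_pCons algebra_simps)
qed

definition Emk :: "real poly \<Rightarrow> real poly" where
  "Emk q = smult (1/2) ([:1,-1:] * (q + smult 2 ([:0,1:] * pderiv q)))"
primrec Op :: "nat \<Rightarrow> real poly" where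
  "Op 0 = 1" | "Op (Suc k) = [:1,-1:] * pderiv (Emk (Op k))"

lemma h1a: "pcompose [:1,-1:] [:0,-1::real:] = [:1,1:]" by (simp add: pcompose_pCons)
lemma h1b: "pcompose [:0,1:] [:0,-1::real:] = [:0,-1:]" by (simp add: pcompose_pCons)
lemma h1c: "pcompose (pderiv q) [:0,-1::real:] = - pderiv (pcompose q [:0,-1:])"
  by (simp add: pderiv_pcompose pderiv_pCons)
lemma h2a: "pcompose [:1,-1:] [:1,1::real:] = [:0,-1:]" by (simp add: pcompose_pCons)
lemma h2b: "pcompose [:0,1:] [:1,1::real:] = [:1,1:]" by (simp add: pcompose_pCons)
lemma h2c: "pcompose (pderiv q) [:1,1::real:] = pderiv (pcompose q [:1,1:])"
  by (simp add: pderiv_pcompose pderiv_pCons)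

lemma pc1_Emk: "pcompose (Emk q) [:0,-1:] =
   smult (1/2) ([:1,1:] * (pcompose q [:0,-1:] + smult 2 ([:0,1:] * pderiv (pcompose q [:0,-1:]))))"
proof -
  have "[:0,-1::real:] * - pderiv (pcompose q [:0,-1:]) = [:0,1:] * pderiv (pcompose q [:0,-1:])"
    by simp
  thus ?thesis
  unfolding Emk_def pcompose_smult pcompose_mult pcompose_add h1a h1b h1c by simp
qed

lemma pc1_Op: "pcompose (Op (Suc k)) [:0,-1:] = - ([:1,1:] * pderiv (pcompose (Emk (Op k)) [:0,-1:]))"
  unfolding Op.simps pcompose_mult h1a h1c by simp

lemma pc2_Emk: "pcompose (Emk q) [:1,1:] =
   smult (1/2) ([:0,-1:] * (pcompose q [:1,1:] + smult 2 ([:1,1:] * pderiv (pcompose q [:1,1:]))))"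
  unfolding Emk_def pcompose_smult pcompose_mult pcompose_add h2a h2b h2c by simp

lemma pc2_Op: "pcompose (Op (Suc k)) [:1,1:] = [:0,-1:] * pderiv (pcompose (Emk (Op k)) [:1,1:])"
  unfolding Op.simps pcompose_mult h2a h2c by simp


lemma step1:
  assumes "NN Q" "poly Q 0 > 0" "P = smult (1/2) ([:1,1:] * (Q + smult 2 ([:0,1:] * pderiv Q)))"
  shows "NN P \<and> poly P 0 > 0 \<and> poly (pderiv P) 0 > 0"
proof -
  have d: "poly (pderiv Q) 0 \<ge> 0" using NN_nonneg NN_pderiv assms(1) by auto
  have "NN P" unfolding assms(3)
    by (intro NN_smult NN_mult NN_add NN_lin NN_pderiv assms(1)) auto
  moreover have "poly P 0 > 0" using assms by simp
  moreover have "poly (pderiv P) 0 > 0" using assms d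
    by (simp add: pderiv_mult pderiv_add pderiv_smult pderiv_pCons)
  ultimately show ?thesis by blast
qed

lemma step2:
  assumes "NN Q" "poly Q 0 > 0 \<or> poly (pderiv Q) 0 > 0"
    "P = smult (1/2) ([:0,1:] * (Q + smult 2 ([:1,1:] * pderiv Q)))"
  shows "NN P \<and> poly (pderiv P) 0 > 0"
proof -
  have d: "poly (pderiv Q) 0 \<ge> 0" "poly Q 0 \<ge> 0" using NN_nonneg NN_pderiv assms(1) by auto
  have "NN P" unfolding assms(3)
    by (intro NN_smult NN_mult NN_add NN_lin NN_pderiv assms(1)) auto
  moreover have "poly (pderiv P) 0 > 0" using assms d
    by (auto simp add: pderiv_mult pderiv_add pderiv_smult pderiv_pCons)
  ultimately show ?thesis by blast
qed

definition "Q1 k = smult ((-1)^k) (pcompose (Op k) [:0,-1:])"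
definition "P1 k = smult ((-1)^k) (pcompose (Emk (Op k)) [:0,-1:])"
definition "Q2 k = pcompose (Op k) [:1,1:]"
definition "P2 k = - pcompose (Emk (Op k)) [:1,1:]"

lemma P1_eq: "P1 k = smult (1/2) ([:1,1:] * (Q1 k + smult 2 ([:0,1:] * pderiv (Q1 k))))"
  unfolding P1_def Q1_def pc1_Emk
  by (subst poly_eq_poly_eq_iff[symmetric]) (simp add: pderiv_smult algebra_simps fun_eq_iff)
lemma Q1_Suc: "Q1 (Suc k) = [:1,1:] * pderiv (P1 k)"
  unfolding P1_def Q1_def pc1_Op
  by (subst poly_eq_poly_eq_iff[symmetric]) (simp add: pderiv_smult algebra_simps fun_eq_iff)
lemma P2_eq: "P2 k = smult (1/2) ([:0,1:] * (Q2 k + smult 2 ([:1,1:] * pderiv (Q2 k))))"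
  unfolding P2_def Q2_def pc2_Emk
  by (subst poly_eq_poly_eq_iff[symmetric]) (simp add: pderiv_minus algebra_simps fun_eq_iff)
lemma Q2_Suc: "Q2 (Suc k) = [:0,1:] * pderiv (P2 k)"
  unfolding P2_def Q2_def pc2_Op
  by (subst poly_eq_poly_eq_iff[symmetric]) (simp add: pderiv_minus algebra_simps fun_eq_iff)

lemma inv1: "NN (Q1 k) \<and> poly (Q1 k) 0 > 0 \<and> NN (P1 k) \<and> poly (P1 k) 0 > 0 \<and> poly (pderiv (P1 k)) 0 > 0"
proof (induction k)
  case 0
  have "NN (Q1 0) \<and> poly (Q1 0) 0 > 0" by (simp add: Q1_def NN_const pcompose_1)
  then show ?case using step1[OF _ _ P1_eq] by blast
next
  case (Suc k)
  have "NN (Q1 (Suc k)) \<and> poly (Q1 (Suc k)) 0 > 0" unfolding Q1_Suc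
    using Suc by (intro conjI NN_mult NN_lin NN_pderiv) auto
  then show ?case using step1[OF _ _ P1_eq] by blast
qed

lemma inv2: "NN (Q2 k) \<and> (poly (Q2 k) 0 > 0 \<or> poly (pderiv (Q2 k)) 0 > 0) \<and> NN (P2 k) \<and> poly (pderiv (P2 k)) 0 > 0"
proof (induction k)
  case 0
  have "NN (Q2 0) \<and> poly (Q2 0) 0 > 0" by (simp add: Q2_def NN_1 pcompose_1)
  then show ?case using step2[OF _ _ P2_eq] by blast
next
  case (Suc k)
  have "NN (Q2 (Suc k))" unfolding Q2_Suc
    using Suc by (intro NN_mult NN_lin NN_pderiv) auto
  moreover have "poly (pderiv (Q2 (Suc k))) 0 > 0" unfolding Q2_Suc
    using Suc by (simp add: pderiv_mult pderiv_pCons)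
  ultimately have "NN (Q2 (Suc k)) \<and> poly (pderiv (Q2 (Suc k))) 0 > 0" by blast
  then show ?case using step2[OF _ _ P2_eq] by blast
qed

lemma E_nonzero:
  assumes "t \<le> 0 \<or> t > 1" shows "poly (Emk (Op k)) t \<noteq> 0"
  using assms
proof
  assume t: "t \<le> 0"
  have "poly (P1 k) 0 + (-t) * poly (pderiv (P1 k)) 0 \<le> poly (P1 k) (-t)"
    using NN_lower[of "P1 k" "-t"] inv1 t by simp
  moreover have "0 \<le> (-t) * poly (pderiv (P1 k)) 0" using inv1[of k] t
    by (intro mult_nonneg_nonneg) auto
  ultimately have "poly (P1 k) (-t) > 0" using inv1[of k] by linarith
  moreover have "poly (P1 k) (-t) = (-1)^k * poly (Emk (Op k)) t"
    by (simp add: P1_def poly_pcompose)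
  ultimately show ?thesis by auto
next
  assume t: "t > 1"
  have "poly (P2 k) 0 + (t-1) * poly (pderiv (P2 k)) 0 \<le> poly (P2 k) (t-1)"
    using NN_lower[of "P2 k" "t-1"] inv2 t by simp
  moreover have "0 < (t-1) * poly (pderiv (P2 k)) 0" using inv2[of k] t by simp
  moreover have "poly (P2 k) 0 \<ge> 0" using inv2[of k] NN_nonneg by auto
  ultimately have "poly (P2 k) (t-1) > 0" by linarith
  moreover have "poly (P2 k) (t-1) = - poly (Emk (Op k)) t"
    by (simp add: P2_def poly_pcompose)
  ultimately show ?thesis by auto
qed


abbreviation cp :: "real poly \<Rightarrow> complex poly" where "cp p \<equiv> map_poly of_real p"

lemma cp_pderiv: "pderiv (cp p) = cp (pderiv p)"
  by (rule poly_eqI) (simp add: coeff_pderiv coeff_map_poly)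
lemma cp_mult: "cp (p * q) = cp p * cp q"
  by (rule poly_eqI) (simp add: coeff_mult coeff_map_poly)
lemma cp_add: "cp (p + q) = cp p + cp q"
  by (rule poly_eqI) (simp add: coeff_map_poly)
lemma cp_smult: "cp (smult c p) = smult (of_real c) (cp p)"
  by (rule poly_eqI) (simp add: coeff_map_poly)
lemma cp_pCons: "cp (pCons a p) = pCons (of_real a) (cp p)"
  by (simp add: map_poly_pCons)
lemma poly_cp_real: "poly (cp p) (of_real x) = of_real (poly p x)"
  by (induction p) (auto simp: map_poly_pCons)

lemma DERIV_cp: "(poly (cp p) has_field_derivative poly (cp (pderiv p)) y) (at y)"
  using poly_DERIV[of "cp p" y] by (simp add: cp_pderiv)

lemma poly_cp_Emk: "poly (cp (Emk q)) y = (1 - y) / 2 * (poly (cp q) y + 2 * y * poly (cp (pderiv q)) y)"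
  unfolding Emk_def cp_smult cp_mult cp_add cp_pCons cp_pderiv by simp (simp add: field_simps)

lemma poly_cp_Op: "poly (cp (Op (Suc k))) y = (1 - y) * poly (cp (pderiv (Emk (Op k)))) y"
  unfolding Op.simps cp_mult cp_pCons by simp (simp add: field_simps)

definition Gc :: "nat \<Rightarrow> complex \<Rightarrow> complex" where
  "Gc n y = (if even n then y * poly (cp (Op (n div 2))) (y^2) else poly (cp (Emk (Op (n div 2)))) (y^2))"

lemma Gc_deriv:
  assumes Y: "(Y has_field_derivative (1 - Y w ^ 2) / 2) (at w)"
  shows "((\<lambda>w. Gc n (Y w)) has_field_derivative Gc (Suc n) (Y w)) (at w)"
proof -
  define k where "k = n div 2"
  have Y2: "((\<lambda>w. Y w ^ 2) has_field_derivative 2 * Y w * ((1 - Y w ^ 2) / 2)) (at w)"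
    using DERIV_power[OF Y, of 2] by (simp add: mult.commute)
  show ?thesis
  proof (cases "even n")
    case True
    have n: "n = 2 * k" using True k_def by simp
    note D = DERIV_mult[OF Y DERIV_chain2[OF DERIV_cp[of "Op k"] Y2]]
    show ?thesis unfolding Gc_def n
      apply simp
      apply (rule DERIV_cong[OF D])
      apply (simp add: poly_cp_Emk)
      apply (simp add: field_simps power2_eq_square)
      done
  next
    case False
    have n: "n = 2 * k + 1" using False k_def by simp
    note D = DERIV_chain2[OF DERIV_cp[of "Emk (Op k)"] Y2]
    show ?thesis unfolding Gc_def n
      apply (simp del: Op.simps)
      apply (rule DERIV_cong[OF D])
      apply (simp add: poly_cp_Op del: Op.simps)
      done
  qed
qed


lemma cosh_ofr: "cosh (complex_of_real z) = of_real (cosh z)"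
  by (simp add: cosh_field_def exp_of_real[symmetric] cosh_def scaleR_conv_of_real)
lemma sinh_ofr: "sinh (complex_of_real z) = of_real (sinh z)"
  by (simp add: sinh_field_def exp_of_real[symmetric] sinh_def scaleR_conv_of_real)

lemma AB_alg:
  fixes C S r cc :: complex
  assumes "C - cc \<noteq> 0" "C^2 = S^2 + 1" "r^2 = cc^2 - 1"
  shows "(C * (C - cc) - (S + r) * S) / ((C - cc) * (C - cc)) = (1 - ((S + r) / (C - cc))^2) / 2"
proof -
  have k: "2 * (C * (C - cc) - (S + r) * S) - ((C - cc)^2 - (S + r)^2) = (C^2 - S^2 - 1) + (r^2 - cc^2 + 1)"
    by (simp add: algebra_simps power2_eq_square)
  hence k2: "2 * (C * (C - cc) - (S + r) * S) = (C - cc)^2 - (S + r)^2" using assms by simp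
  have "(1 - ((S + r) / (C - cc))^2) / 2 = ((C - cc)^2 - (S + r)^2) / (2 * (C - cc)^2)"
    using assms(1) by (simp add: field_simps)
  also have "\<dots> = (2 * (C * (C - cc) - (S + r) * S)) / (2 * ((C - cc) * (C - cc)))"
    by (simp only: k2 power2_eq_square)
  also have "\<dots> = (C * (C - cc) - (S + r) * S) / ((C - cc) * (C - cc))"
    by (rule mult_divide_mult_cancel_left) simp
  finally show ?thesis by (rule sym)
qed

lemma AB_deriv:
  fixes r :: complex and c :: real
  assumes r: "r^2 = of_real (c^2 - 1)" and D: "cosh w - of_real c \<noteq> 0"
  shows "((\<lambda>w. (sinh w + r) / (cosh w - of_real c)) has_field_derivative
          (1 - ((sinh w + r) / (cosh w - of_real c))^2) / 2) (at w)"
proof -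
  have d: "((\<lambda>w. (sinh w + r) / (cosh w - of_real c)) has_field_derivative
      (cosh w * (cosh w - of_real c) - (sinh w + r) * sinh w) / ((cosh w - of_real c) * (cosh w - of_real c))) (at w)"
    using D by (auto intro!: derivative_eq_intros)
  show ?thesis
    apply (rule DERIV_cong[OF d])
    apply (rule AB_alg[OF D cosh_square_eq])
    using r by simp
qed

definition rho :: "real \<Rightarrow> complex" where "rho x = csqrt (of_real ((1-x)^2 - 1))"
definition Kf :: "real \<Rightarrow> nat \<Rightarrow> complex \<Rightarrow> complex" where
  "Kf x n w = (Gc n ((sinh w + (- rho x)) / (cosh w - of_real (1-x))) +
               Gc n ((sinh w + rho x) / (cosh w - of_real (1-x)))) / 2"

lemma K_deriv:
  assumes "cosh w - of_real (1-x) \<noteq> 0"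
  shows "(Kf x n has_field_derivative Kf x (Suc n) w) (at w)"
proof -
  have r1: "(- rho x)^2 = of_real ((1-x)^2 - 1)" and r2: "(rho x)^2 = of_real ((1-x)^2 - 1)"
    by (simp_all add: rho_def)
  note d1 = Gc_deriv[OF AB_deriv[OF r1 assms], of n]
  note d2 = Gc_deriv[OF AB_deriv[OF r2 assms], of n]
  show ?thesis unfolding Kf_def[abs_def]
    by (rule DERIV_cdivide[OF DERIV_add[OF d1 d2]])
qed

lemma deriv_main:
  assumes x: "x \<noteq> 0"
  shows "cosh z - 1 + x \<noteq> 0 \<Longrightarrow> (deriv ^^ n) (\<lambda>z. sinh z / (cosh z - 1 + x)) z = Re (Kf x n (of_real z))"
proof (induction n arbitrary: z)
  case 0
  have g0: "\<And>y. Gc 0 y = y" by (simp add: Gc_def)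
  have dd: "cosh (complex_of_real z) - of_real (1-x) = of_real (cosh z - 1 + x)"
    by (simp add: cosh_ofr)
  have nz: "complex_of_real (cosh z - 1 + x) \<noteq> 0" using 0 of_real_eq_0_iff by blast
  have gen: "\<And>a r d::complex. d \<noteq> 0 \<Longrightarrow> ((a + -r)/d + (a + r)/d)/2 = a/d"
    by (simp add: field_simps)
  have "Kf x 0 (of_real z) = of_real (sinh z / (cosh z - 1 + x))"
    unfolding Kf_def g0 dd sinh_ofr gen[OF nz] by simp
  then show ?case by simp
next
  case (Suc n)
  define S where "S = {z::real. cosh z - 1 + x \<noteq> 0}"
  have oS: "open S" unfolding S_def
    by (intro open_Collect_neq continuous_intros)
  have zS: "z \<in> S" using Suc.prems S_def by simp
  have Dz: "cosh (complex_of_real z) - of_real (1-x) \<noteq> 0"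
    using Suc.prems by (simp add: cosh_ofr flip: of_real_diff)
  have h: "((\<lambda>z. Re (Kf x n (of_real z))) has_field_derivative Re (Kf x (Suc n) (of_real z))) (at z)"
    by (rule has_field_derivative_Re[OF has_vector_derivative_real_field[OF K_deriv[OF Dz]]])
  have "((deriv ^^ n) (\<lambda>z. sinh z / (cosh z - 1 + x)) has_field_derivative Re (Kf x (Suc n) (of_real z))) (at z)"
    by (rule has_field_derivative_transform_within_open[OF h oS zS]) (simp add: Suc.IH S_def)
  then show ?case by (simp add: DERIV_imp_deriv)
qed

lemma alpha_eq:
  assumes x: "x \<noteq> 0"
  shows "alpha k x = poly (Emk (Op k)) (((1-x)^2-1)/x^2) / fact (2*k+1)"
proof -
  define t0 where "t0 = ((1-x)^2-1)/x^2"
  have d: "(deriv ^^ (2*k+1)) (\<lambda>z. sinh z / (cosh z - 1 + x)) 0 = Re (Kf x (2*k+1) (of_real 0))"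
    using deriv_main[OF x, of 0 "2*k+1"] x by simp
  have r2: "(rho x)^2 = of_real ((1-x)^2 - 1)" by (simp add: rho_def)
  have sq1: "((0 + - rho x) / (1 - of_real (1-x)))^2 = complex_of_real t0"
    using r2 by (simp add: t0_def power_divide)
  have sq2: "((0 + rho x) / (1 - of_real (1-x)))^2 = complex_of_real t0"
    using r2 by (simp add: t0_def power_divide)
  have "Kf x (2*k+1) (of_real 0) = of_real (poly (Emk (Op k)) t0)"
    unfolding Kf_def of_real_0 sinh_0 cosh_0
    apply (simp only: Gc_def sq1 sq2)
    apply (simp add: poly_cp_real)
    done
  then show ?thesis unfolding alpha_def d t0_def[symmetric] by simp
qed

theorem proposition2p3:
  fixes m :: nat and \<xi> :: real and s :: real and \<eta> :: "real \<Rightarrow> real"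
  assumes "m \<ge> 1"
    and "\<xi> \<noteq> 0" and "alpha m \<xi> = 0"
    and "s \<in> {1, -1}"
    and "((\<lambda>\<Delta>. \<eta> \<Delta> - (\<xi> - 1 + s * sqrt ((\<xi> - 1)\<^sup>2 - 1))) \<longlongrightarrow> 0) (at_right 0)"
    and "\<forall>\<^sub>F \<Delta> in at_right 0. \<bar>\<eta> \<Delta>\<bar> < 1"
  shows "s = -1 \<and> \<xi> - 1 - sqrt ((\<xi> - 1)\<^sup>2 - 1) \<in> {0<..<1}"
proof -
  define t0 where "t0 = ((1-\<xi>)^2-1)/\<xi>^2"
  have "poly (Emk (Op m)) t0 = 0"
    using assms(3) alpha_eq[OF assms(2), of m] by (simp add: t0_def)
  hence t: "\<not> (t0 \<le> 0 \<or> t0 > 1)" using E_nonzero by blast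
  have t0e: "t0 = 1 - 2/\<xi>" using assms(2) by (simp add: t0_def field_simps power2_eq_square)
  have xi2: "\<xi> > 2"
  proof (cases "\<xi> < 0")
    case True
    hence "2/\<xi> < 0" by (simp add: divide_pos_neg)
    thus ?thesis using t t0e by simp
  next
    case False
    hence pos: "\<xi> > 0" using assms(2) by simp
    have "2/\<xi> < 1" using t t0e by simp
    thus ?thesis using pos by (simp add: field_simps)
  qed
  define a where "a = \<xi> - 1"
  define q where "q = sqrt (a^2 - 1)"
  have a1: "a > 1" using xi2 a_def by simp
  have "1 < a * a" using a1 by (rule less_1_mult[OF _ a1])
  hence qpos: "q > 0" unfolding q_def by (simp add: power2_eq_square)
  have "sqrt (a^2-1) < sqrt (a^2)" by (rule real_sqrt_less_mono) simp
  hence qa: "q < a" unfolding q_def using a1 by simp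
  have qa1: "a - 1 < q" unfolding q_def using a1 by (intro real_less_rsqrt) (simp add: power2_eq_square algebra_simps)
  define L where "L = a + s * q"
  have lim: "(\<eta> \<longlongrightarrow> L) (at_right 0)"
  proof -
    have "((\<lambda>\<Delta>. (\<eta> \<Delta> - L) + L) \<longlongrightarrow> 0 + L) (at_right 0)"
      using assms(5) unfolding L_def a_def q_def by (intro tendsto_add) auto
    thus ?thesis by simp
  qed
  have "\<bar>L\<bar> \<le> 1"
  proof (rule tendsto_upperbound)
    show "((\<lambda>\<Delta>. \<bar>\<eta> \<Delta>\<bar>) \<longlongrightarrow> \<bar>L\<bar>) (at_right 0)" by (intro tendsto_intros lim)
    show "\<forall>\<^sub>F \<Delta> in at_right 0. \<bar>\<eta> \<Delta>\<bar> \<le> 1" using assms(6) by (auto elim: eventually_mono)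
  qed (simp add: trivial_limit_at_right_real)
  hence s: "s = -1" using assms(4) qpos a1 unfolding L_def by auto
  show ?thesis using s qa qa1 unfolding a_def[symmetric] q_def[symmetric] by simp
qed

end
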